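(* Let $I$ and $J$ be finite sets, let $g\in\mathbb{R}^J$, and for each $i\in I$ let $u_i:\mathbb{R}^J\to\mathbb{R}\cup\{-\infty\}$ be upper semicontinuous and concave with $u_i(x_i+rg)>u_i(x_i)$ for all $x_i\in\mathrm{dom}\,u_i$ and $r>0$. Let $x^0\in\mathbb{R}^{I\times J}$, define $D_i(x_i):=\sup\{r\in\mathbb{R}\mid u_i(x^0_i+x_i-rg)\ge u_i(x^0_i)\}$, and assume there is $\varepsilon>0$ such that for every $z\in\mathbb{R}^J$ with $|z|\le\varepsilon$ the optimal value of the problem "maximize $\sum_{i\in I}D_i(x_i)$ over $x\in\mathbb{R}^{I\times J}$ subject to $\sum_{i\in I}x_i=z$" is finite. Then the following are equivalent: (1) $x^0$ is a double auction equilibrium; (2) there is $p\in\mathbb{R}^J$ with $p\in\partial D_i(0)$ for all $i\in I$; (3) there is $p\in\mathbb{R}^J$ with $g\cdot p=1$ such that, for all $i\in I$, $p\cdot w_i\ge p\cdot x^0_i$ for all $w_i\in\mathbb{R}^J$ with $u_i(w_i)\ge u_i(x^0_i)$.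
   Context: $\mathrm{dom}\,u_i=\{x\mid u_i(x)>-\infty\}$. $\partial D_i(\bar x_i)$ denotes the superdifferential of the concave function $D_i$ at $\bar x_i$: the set of $p\in\mathbb{R}^J$ with $D_i(x_i)\le D_i(\bar x_i)+p\cdot(x_i-\bar x_i)$ for all $x_i\in\mathbb{R}^J$. $CS(x^0)$ is the optimal value of the problem: maximize $\sum_{i\in I}D_i(x_i)$ over $x\in\mathbb{R}^{I\times J}$ subject to $\sum_{i\in I}x_i=0$; $x^0$ is a double auction equilibrium if $CS(x^0)=0$. *)

theory Defs
  imports "HOL-Analysis.Analysis"
begin

text \<open>Vectors in R^J are modelled as real^'j for a finite type 'j; allocations
x in R^(I x J) as functions 'i => real^'j for a finite type 'i. Utilities take
values in ereal and are assumed never to be +infinity.\<close>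

definition usc :: "('a::topological_space \<Rightarrow> ereal) \<Rightarrow> bool" where
  "usc u \<longleftrightarrow> (\<forall>c::ereal. closed {x. c \<le> u x})"

definition concave_ext :: "('a::real_vector \<Rightarrow> ereal) \<Rightarrow> bool" where
  "concave_ext u \<longleftrightarrow> convex {(x, r::real). ereal r \<le> u x}"

definition edom :: "('a \<Rightarrow> ereal) \<Rightarrow> 'a set" where
  "edom u = {x. u x > -\<infinity>}"

definition Dfun :: "(real^'j \<Rightarrow> ereal) \<Rightarrow> real^'j \<Rightarrow> real^'j \<Rightarrow> real^'j \<Rightarrow> ereal" where
  "Dfun ui g x0i xi = Sup (ereal ` {r::real. ui (x0i + xi - r *\<^sub>R g) \<ge> ui x0i})"

definition optval :: "('i::finite \<Rightarrow> real^'j \<Rightarrow> ereal) \<Rightarrow> real^'j \<Rightarrow> ('i \<Rightarrow> real^'j) \<Rightarrow> real^'j \<Rightarrow> ereal" where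
  "optval u g x0 z = Sup {(\<Sum>i\<in>UNIV. Dfun (u i) g (x0 i) (x i)) | x. (\<Sum>i\<in>UNIV. x i) = z}"

definition CS :: "('i::finite \<Rightarrow> real^'j \<Rightarrow> ereal) \<Rightarrow> real^'j \<Rightarrow> ('i \<Rightarrow> real^'j) \<Rightarrow> ereal" where
  "CS u g x0 = optval u g x0 0"

definition double_auction_eq :: "('i::finite \<Rightarrow> real^'j \<Rightarrow> ereal) \<Rightarrow> real^'j \<Rightarrow> ('i \<Rightarrow> real^'j) \<Rightarrow> bool" where
  "double_auction_eq u g x0 \<longleftrightarrow> CS u g x0 = 0"

definition superdiff :: "('a::real_inner \<Rightarrow> ereal) \<Rightarrow> 'a \<Rightarrow> 'a set" where
  "superdiff D xb = {p. \<forall>x. D x \<le> D xb + ereal (p \<bullet> (x - xb))}"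

end

theory Submission
  imports Defs
begin

lemma Dfun_ge:
  assumes "ui (x0i + y - r *\<^sub>R g) \<ge> ui x0i"
  shows "ereal r \<le> Dfun ui g x0i y"
  unfolding Dfun_def using assms by (auto intro: Sup_upper)

lemma Dfun_le:
  assumes "\<And>r. ui (x0i + y - r *\<^sub>R g) \<ge> ui x0i \<Longrightarrow> r \<le> c"
  shows "Dfun ui g x0i y \<le> ereal c"
  unfolding Dfun_def using assms by (auto intro!: Sup_least)

lemma Dfun_minf:
  assumes "Dfun ui g x0i y \<noteq> -\<infinity>"
  shows "\<exists>r. ui (x0i + y - r *\<^sub>R g) \<ge> ui x0i"
  using assms unfolding Dfun_def by (auto simp: bot_ereal_def[symmetric])

lemma sum_minf:
  fixes f :: "'a \<Rightarrow> ereal"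
  assumes "finite S" "i \<in> S" "f i = -\<infinity>"
  shows "sum f S = -\<infinity> \<or> sum f S = \<infinity>"
  using assms
proof (induct S rule: finite_induct)
  case empty then show ?case by simp
next
  case (insert a S)
  show ?case
  proof (cases "a = i")
    case True
    then show ?thesis using insert by (cases "sum f S") auto
  next
    case False
    then have "sum f S = -\<infinity> \<or> sum f S = \<infinity>" using insert by auto
    then show ?thesis using insert by (cases "f a") auto
  qed
qed

lemma A_convex:
  fixes ui :: "real^'j::finite \<Rightarrow> ereal"
  assumes conc: "concave_ext ui" and fin: "ui x0i \<noteq> \<infinity>"
    and h1: "ui (x0i + y1 - r1 *\<^sub>R g) \<ge> ui x0i"
    and h2: "ui (x0i + y2 - r2 *\<^sub>R g) \<ge> ui x0i"
    and l: "0 \<le> l" "l \<le> 1"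
  shows "ui (x0i + (l *\<^sub>R y1 + (1-l) *\<^sub>R y2) - (l*r1 + (1-l)*r2) *\<^sub>R g) \<ge> ui x0i"
proof (cases "ui x0i")
  case MInf then show ?thesis by simp
next
  case PInf then show ?thesis using fin by simp
next
  case (real c)
  let ?H = "{(x, r::real). ereal r \<le> ui x}"
  have cv: "convex ?H" using conc unfolding concave_ext_def .
  have m1: "(x0i + y1 - r1 *\<^sub>R g, c) \<in> ?H" using h1 real by simp
  have m2: "(x0i + y2 - r2 *\<^sub>R g, c) \<in> ?H" using h2 real by simp
  have "l *\<^sub>R (x0i + y1 - r1 *\<^sub>R g, c) + (1-l) *\<^sub>R (x0i + y2 - r2 *\<^sub>R g, c) \<in> ?H"
    using convexD[OF cv m1 m2, of l "1-l"] l by simp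
  moreover have "l *\<^sub>R (x0i + y1 - r1 *\<^sub>R g, c) + (1-l) *\<^sub>R (x0i + y2 - r2 *\<^sub>R g, c)
     = (x0i + (l *\<^sub>R y1 + (1-l) *\<^sub>R y2) - (l*r1 + (1-l)*r2) *\<^sub>R g, c)"
    by (simp add: algebra_simps)
  ultimately show ?thesis using real by simp
qed


theorem lemma5p3:
  fixes u :: "'i::finite \<Rightarrow> real^'j::finite \<Rightarrow> ereal"
    and g :: "real^'j"
    and x0 :: "'i \<Rightarrow> real^'j"
  assumes no_pinf: "\<And>i x. u i x \<noteq> \<infinity>"
    and usc: "\<And>i. usc (u i)"
    and concave: "\<And>i. concave_ext (u i)"
    and mono: "\<And>i xi r. xi \<in> edom (u i) \<Longrightarrow> r > 0 \<Longrightarrow> u i (xi + r *\<^sub>R g) > u i xi"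
    and finite_val: "\<exists>\<epsilon>>0. \<forall>z. norm z \<le> \<epsilon> \<longrightarrow> \<bar>optval u g x0 z\<bar> \<noteq> \<infinity>"
  shows "(double_auction_eq u g x0
            \<longleftrightarrow> (\<exists>p. \<forall>i. p \<in> superdiff (Dfun (u i) g (x0 i)) 0))
       \<and> ((\<exists>p. \<forall>i. p \<in> superdiff (Dfun (u i) g (x0 i)) 0)
            \<longleftrightarrow> (\<exists>p. g \<bullet> p = 1 \<and>
                   (\<forall>i w. u i w \<ge> u i (x0 i) \<longrightarrow> p \<bullet> w \<ge> p \<bullet> x0 i)))"
proof -
  obtain e where e: "e > 0" and fin: "\<And>z. norm z \<le> e \<Longrightarrow> \<bar>optval u g x0 z\<bar> \<noteq> \<infinity>"
    using finite_val by blast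
  have F0: "u i (x0 i) \<noteq> -\<infinity>" for i
  proof
    assume m: "u i (x0 i) = -\<infinity>"
    have "Dfun (u i) g (x0 i) 0 = \<infinity>"
      by (rule ereal_top, rule Dfun_ge) (simp add: m)
    hence "(\<Sum>k\<in>UNIV. Dfun (u k) g (x0 k) ((\<lambda>_. 0) k)) = \<infinity>"
      by (subst sum_Pinfty) auto
    moreover have "(\<Sum>k\<in>UNIV. Dfun (u k) g (x0 k) ((\<lambda>_. 0) k)) \<le> optval u g x0 0"
      unfolding optval_def by (rule Sup_upper) auto
    ultimately have "optval u g x0 0 = \<infinity>" by (simp add: top_ereal_def[symmetric] top_unique)
    with fin[of 0] e show False by simp
  qed
  have D0le: "Dfun (u i) g (x0 i) 0 \<le> 0" for i
  proof -
    have "Dfun (u i) g (x0 i) 0 \<le> ereal 0"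
    proof (rule Dfun_le)
      fix r assume h: "u i (x0 i) \<le> u i (x0 i + 0 - r *\<^sub>R g)"
      show "r \<le> 0"
      proof (rule ccontr)
        assume "\<not> r \<le> 0" hence r: "r > 0" by simp
        let ?w = "x0 i - r *\<^sub>R g"
        have "u i ?w \<ge> u i (x0 i)" using h by simp
        moreover have "u i (x0 i) > -\<infinity>" using F0[of i] by simp
        ultimately have "?w \<in> edom (u i)" unfolding edom_def using less_le_trans by blast
        from mono[OF this r] have "u i ?w < u i (x0 i)" by simp
        with h show False by simp
      qed
    qed
    thus ?thesis by (simp add: zero_ereal_def)
  qed
  have D0ge: "0 \<le> Dfun (u i) g (x0 i) 0" for i
    using Dfun_ge[of "u i" "x0 i" 0 0 g] by (simp add: zero_ereal_def)
  have D0: "Dfun (u i) g (x0 i) 0 = 0" for i using D0le D0ge by (simp add: antisym)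
  have sd: "p \<in> superdiff (Dfun (u i) g (x0 i)) 0 \<longleftrightarrow> (\<forall>y. Dfun (u i) g (x0 i) y \<le> ereal (p \<bullet> y))"
    for p i by (simp add: superdiff_def D0)
  let ?P2 = "\<exists>p. \<forall>i y. Dfun (u i) g (x0 i) y \<le> ereal (p \<bullet> y)"
  have P2eq: "(\<exists>p. \<forall>i. p \<in> superdiff (Dfun (u i) g (x0 i)) 0) \<longleftrightarrow> ?P2"
    using sd by blast
  have P21: "?P2 \<Longrightarrow> double_auction_eq u g x0"
  proof -
    assume "?P2"
    then obtain p where p: "\<And>i y. Dfun (u i) g (x0 i) y \<le> ereal (p \<bullet> y)" by blast
    have "optval u g x0 0 \<le> 0"
      unfolding optval_def
    proof (rule Sup_least)
      fix s assume "s \<in> {\<Sum>i\<in>UNIV. Dfun (u i) g (x0 i) (x i) |x. (\<Sum>i\<in>UNIV. x i) = 0}"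
      then obtain x where x: "(\<Sum>i\<in>UNIV. x i) = 0" and s: "s = (\<Sum>i\<in>UNIV. Dfun (u i) g (x0 i) (x i))"
        by blast
      have "s \<le> (\<Sum>i\<in>UNIV. ereal (p \<bullet> x i))" unfolding s by (rule sum_mono) (rule p)
      also have "\<dots> = ereal (p \<bullet> (\<Sum>i\<in>UNIV. x i))" by (simp add: inner_sum_right)
      finally show "s \<le> 0" using x by (simp add: zero_ereal_def)
    qed
    moreover have "0 \<le> optval u g x0 0"
      unfolding optval_def
    proof (rule Sup_upper2)
      show "(\<Sum>i\<in>UNIV. Dfun (u i) g (x0 i) ((\<lambda>_. 0) i)) \<in> {\<Sum>i\<in>UNIV. Dfun (u i) g (x0 i) (x i) |x. (\<Sum>i\<in>UNIV. x i) = 0}"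
        by auto
      show "0 \<le> (\<Sum>i\<in>UNIV. Dfun (u i) g (x0 i) ((\<lambda>_. 0) i))" by (simp add: D0)
    qed
    ultimately show ?thesis unfolding double_auction_eq_def CS_def by (simp add: antisym)
  qed
  have P23: "?P2 \<Longrightarrow> (\<exists>p. g \<bullet> p = 1 \<and> (\<forall>i w. u i w \<ge> u i (x0 i) \<longrightarrow> p \<bullet> w \<ge> p \<bullet> x0 i))"
  proof -
    assume "?P2"
    then obtain p where p: "\<And>i y. Dfun (u i) g (x0 i) y \<le> ereal (p \<bullet> y)" by blast
    fix i0 :: 'i
    have "ereal 1 \<le> Dfun (u i0) g (x0 i0) g" by (rule Dfun_ge) simp
    with p[of i0 g] have a: "1 \<le> p \<bullet> g" by (meson ereal_less_eq(3) order_trans)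
    have "ereal (-1) \<le> Dfun (u i0) g (x0 i0) (-g)" by (rule Dfun_ge) simp
    with p[of i0 "-g"] have b: "-1 \<le> p \<bullet> (-g)" by (meson ereal_less_eq(3) order_trans)
    have "g \<bullet> p = 1" using a b by (simp add: inner_commute)
    moreover have "p \<bullet> w \<ge> p \<bullet> x0 i" if "u i w \<ge> u i (x0 i)" for i w
    proof -
      have "ereal 0 \<le> Dfun (u i) g (x0 i) (w - x0 i)" by (rule Dfun_ge) (simp add: that)
      with p[of i "w - x0 i"] have "0 \<le> p \<bullet> (w - x0 i)" by (meson ereal_less_eq(3) order_trans)
      thus ?thesis by (simp add: inner_diff_right)
    qed
    ultimately show ?thesis by blast
  qed
  have P32: "(\<exists>p. g \<bullet> p = 1 \<and> (\<forall>i w. u i w \<ge> u i (x0 i) \<longrightarrow> p \<bullet> w \<ge> p \<bullet> x0 i)) \<Longrightarrow> ?P2"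
  proof -
    assume "\<exists>p. g \<bullet> p = 1 \<and> (\<forall>i w. u i w \<ge> u i (x0 i) \<longrightarrow> p \<bullet> w \<ge> p \<bullet> x0 i)"
    then obtain p where gp: "g \<bullet> p = 1" and pw: "\<And>i w. u i w \<ge> u i (x0 i) \<Longrightarrow> p \<bullet> w \<ge> p \<bullet> x0 i"
      by blast
    have "Dfun (u i) g (x0 i) y \<le> ereal (p \<bullet> y)" for i y
    proof (rule Dfun_le)
      fix r assume "u i (x0 i) \<le> u i (x0 i + y - r *\<^sub>R g)"
      from pw[OF this] have "p \<bullet> x0 i \<le> p \<bullet> x0 i + p \<bullet> y - r * (p \<bullet> g)"
        by (simp add: inner_add_right inner_diff_right)
      thus "r \<le> p \<bullet> y" using gp by (simp add: inner_commute)
    qed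
    thus ?thesis by blast
  qed
  have P12: "double_auction_eq u g x0 \<Longrightarrow> ?P2"
  proof -
    assume "double_auction_eq u g x0"
    hence CS0: "optval u g x0 0 = 0" unfolding double_auction_eq_def CS_def .
    define A where "A i = {(y, r). u i (x0 i + y - r *\<^sub>R g) \<ge> u i (x0 i)}" for i
    have A00: "(0, 0) \<in> A i" for i unfolding A_def by simp
    have Aconv: "(l *\<^sub>R y1 + (1-l) *\<^sub>R y2, l*r1 + (1-l)*r2) \<in> A i"
      if "(y1, r1) \<in> A i" "(y2, r2) \<in> A i" "0 \<le> l" "l \<le> 1" for i y1 r1 y2 r2 l
    proof -
      have h1: "u i (x0 i + y1 - r1 *\<^sub>R g) \<ge> u i (x0 i)" using that(1) unfolding A_def by simp
      have h2: "u i (x0 i + y2 - r2 *\<^sub>R g) \<ge> u i (x0 i)" using that(2) unfolding A_def by simp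
      show ?thesis using A_convex[OF concave no_pinf h1 h2 that(3,4)] unfolding A_def by simp
    qed
    define S :: "((real^'j) \<times> real) set" where
      "S = {(z, t). norm z < e \<and> (\<exists>x r. (\<Sum>i\<in>UNIV. x i) = z \<and> (\<forall>i. (x i, r i) \<in> A i) \<and> t < (\<Sum>i\<in>UNIV. r i))}"
    have inS: "(z, t) \<in> S" if "norm z < e" "(\<Sum>i\<in>UNIV. x i) = z" "\<And>i. (x i, r i) \<in> A i"
      "t < (\<Sum>i\<in>UNIV. r i)" for z t x r
      unfolding S_def using that by blast
    have cvS: "convex S"
      unfolding convex_def
    proof (intro ballI allI impI)
      fix s1 s2 :: "(real^'j) \<times> real" and a b :: real
      assume s1: "s1 \<in> S" and s2: "s2 \<in> S" and ab: "0 \<le> a" "0 \<le> b" "a + b = 1"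
      obtain z1 t1 where s1e: "s1 = (z1, t1)" by force
      obtain z2 t2 where s2e: "s2 = (z2, t2)" by force
      obtain x1 r1 where n1: "norm z1 < e" and x1: "(\<Sum>i\<in>UNIV. x1 i) = z1" and A1: "\<And>i. (x1 i, r1 i) \<in> A i"
        and t1: "t1 < (\<Sum>i\<in>UNIV. r1 i)" using s1 unfolding s1e S_def by blast
      obtain x2 r2 where n2: "norm z2 < e" and x2: "(\<Sum>i\<in>UNIV. x2 i) = z2" and A2: "\<And>i. (x2 i, r2 i) \<in> A i"
        and t2: "t2 < (\<Sum>i\<in>UNIV. r2 i)" using s2 unfolding s2e S_def by blast
      have b: "b = 1 - a" using ab by simp
      have "a *\<^sub>R z1 + b *\<^sub>R z2 \<in> ball 0 e"
        using convexD[OF convex_ball[of "0::real^'j" e], of z1 z2 a b] n1 n2 ab by simp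
      hence n: "norm (a *\<^sub>R z1 + b *\<^sub>R z2) < e" by simp
      have "(a *\<^sub>R z1 + b *\<^sub>R z2, a * t1 + b * t2) \<in> S"
      proof (rule inS[OF n, of "\<lambda>i. a *\<^sub>R x1 i + b *\<^sub>R x2 i" "\<lambda>i. a * r1 i + b * r2 i"])
        show "(\<Sum>i\<in>UNIV. a *\<^sub>R x1 i + b *\<^sub>R x2 i) = a *\<^sub>R z1 + b *\<^sub>R z2"
          using x1 x2 by (simp add: sum.distrib scaleR_sum_right[symmetric])
        show "(a *\<^sub>R x1 i + b *\<^sub>R x2 i, a * r1 i + b * r2 i) \<in> A i" for i
          using Aconv[OF A1 A2, of a i] ab unfolding b by simp
        have "a * t1 + b * t2 < a * (\<Sum>i\<in>UNIV. r1 i) + b * (\<Sum>i\<in>UNIV. r2 i)"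
        proof (cases "a = 0")
          case True then show ?thesis using t2 ab by simp
        next
          case False
          hence "a * t1 < a * (\<Sum>i\<in>UNIV. r1 i)" using t1 ab by simp
          moreover have "b * t2 \<le> b * (\<Sum>i\<in>UNIV. r2 i)" using t2 ab by (simp add: mult_left_mono)
          ultimately show ?thesis by simp
        qed
        thus "a * t1 + b * t2 < (\<Sum>i\<in>UNIV. a * r1 i + b * r2 i)"
          by (simp add: sum.distrib sum_distrib_left)
      qed
      thus "a *\<^sub>R s1 + b *\<^sub>R s2 \<in> S" unfolding s1e s2e by simp
    qed
    have notin: "(0::(real^'j) \<times> real) \<notin> S"
    proof
      assume "(0::(real^'j) \<times> real) \<in> S"
      then obtain x r where x: "(\<Sum>i\<in>UNIV. x i) = 0" and Ax: "\<And>i. (x i, r i) \<in> A i"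
        and pos: "0 < (\<Sum>i\<in>UNIV. r i)" unfolding S_def zero_prod_def by blast
      have "ereal (\<Sum>i\<in>UNIV. r i) = (\<Sum>i\<in>UNIV. ereal (r i))" by simp
      also have "\<dots> \<le> (\<Sum>i\<in>UNIV. Dfun (u i) g (x0 i) (x i))"
        by (rule sum_mono, rule Dfun_ge) (use Ax in \<open>auto simp: A_def\<close>)
      also have "\<dots> \<le> optval u g x0 0"
        unfolding optval_def by (rule Sup_upper) (use x in auto)
      finally show False using CS0 pos by simp
    qed
    obtain ab where ab0: "ab \<noteq> 0" and abS: "\<And>s. s \<in> S \<Longrightarrow> 0 \<le> inner ab s"
      using separating_hyperplane_set_0[OF cvS notin] by blast
    obtain a b where abe: "ab = (a, b)" by force
    have sep: "0 \<le> a \<bullet> z + b * t" if "(z, t) \<in> S" for z t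
      using abS[OF that] unfolding abe by simp
    have "(0, -1) \<in> S"
      by (rule inS[of 0 "\<lambda>_. 0" "\<lambda>_. 0"]) (use e A00 in auto)
    from sep[OF this] have ble: "b \<le> 0" by simp
    have bne: "b \<noteq> 0"
    proof
      assume b0: "b = 0"
      hence an: "a \<noteq> 0" using ab0 abe by (auto simp: zero_prod_def)
      define z where "z = - (e / (2 * norm a)) *\<^sub>R a"
      have nz: "norm z = e / 2" using an e unfolding z_def by simp
      have "\<exists>x. (\<Sum>i\<in>UNIV. x i) = z \<and> (\<forall>i. Dfun (u i) g (x0 i) (x i) \<noteq> -\<infinity>)"
      proof (rule ccontr)
        assume nex: "\<not> ?thesis"
        let ?X = "{\<Sum>i\<in>UNIV. Dfun (u i) g (x0 i) (x i) |x. (\<Sum>i\<in>UNIV. x i) = z}"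
        have X: "s = -\<infinity> \<or> s = \<infinity>" if "s \<in> ?X" for s
        proof -
          obtain x where "(\<Sum>i\<in>UNIV. x i) = z" and s: "s = (\<Sum>i\<in>UNIV. Dfun (u i) g (x0 i) (x i))"
            using \<open>s \<in> ?X\<close> by blast
          then obtain i where "Dfun (u i) g (x0 i) (x i) = -\<infinity>" using nex by blast
          from sum_minf[of UNIV i "\<lambda>i. Dfun (u i) g (x0 i) (x i)", OF _ _ this] show ?thesis
            unfolding s by simp
        qed
        have "optval u g x0 z = -\<infinity> \<or> optval u g x0 z = \<infinity>"
        proof (cases "\<infinity> \<in> ?X")
          case True
          hence "\<infinity> \<le> Sup ?X" by (rule Sup_upper)
          thus ?thesis unfolding optval_def by (simp add: top_ereal_def[symmetric] top_unique)
        next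
          case False
          have "Sup ?X \<le> -\<infinity>"
          proof (rule Sup_least)
            fix s assume "s \<in> ?X"
            have "s \<noteq> \<infinity>"
            proof
              assume "s = \<infinity>"
              with False \<open>s \<in> ?X\<close> show False by (simp only:)
            qed
            with X[OF \<open>s \<in> ?X\<close>] have "s = -\<infinity>" by simp
            thus "s \<le> -\<infinity>" by simp
          qed
          thus ?thesis unfolding optval_def by simp
        qed
        with fin[of z] nz e show False by auto
      qed
      then obtain x where xz: "(\<Sum>i\<in>UNIV. x i) = z" and xf: "\<And>i. Dfun (u i) g (x0 i) (x i) \<noteq> -\<infinity>"
        by blast
      have "\<forall>i. \<exists>r. (x i, r) \<in> A i" using Dfun_minf[OF xf] unfolding A_def by auto
      from choice[OF this] obtain r where r: "\<And>i. (x i, r i) \<in> A i" by blast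
      have "(z, (\<Sum>i\<in>UNIV. r i) - 1) \<in> S"
        by (rule inS[OF _ xz r]) (use nz e in auto)
      from sep[OF this] b0 have "0 \<le> a \<bullet> z" by simp
      moreover have "a \<bullet> z = - (e / (2 * norm a)) * (a \<bullet> a)" unfolding z_def by simp
      moreover have "(e / (2 * norm a)) * (a \<bullet> a) > 0" using an e by simp
      ultimately show False by simp
    qed
    have bneg: "b < 0" using ble bne by simp
    define p where "p = (- 1 / b) *\<^sub>R a"
    have key: "t \<le> p \<bullet> z" if "(z, t) \<in> S" for z t
    proof -
      have h: "- b * t \<le> a \<bullet> z" using sep[OF that] by simp
      have nb: "- b > 0" using bneg by simp
      have "t = (- b * t) / (- b)" using nb by simp
      also have "\<dots> \<le> (a \<bullet> z) / (- b)" by (rule divide_right_mono) (use h nb in auto)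
      finally have "t \<le> (a \<bullet> z) / (- b)" .
      thus ?thesis unfolding p_def by simp
    qed
    have small: "r \<le> p \<bullet> y" if "(y, r) \<in> A i" "norm y < e" for i y r
    proof (rule dense_le)
      fix t assume "t < r"
      have "(y, t) \<in> S"
      proof (rule inS[OF \<open>norm y < e\<close>, of "\<lambda>k. if k = i then y else 0" "\<lambda>k. if k = i then r else 0"])
        show "(\<Sum>k\<in>UNIV. if k = i then y else 0) = y" by simp
        show "((if k = i then y else 0), (if k = i then r else 0)) \<in> A k" for k
          using that A00 by auto
        show "t < (\<Sum>k\<in>UNIV. if k = i then r else 0)" using \<open>t < r\<close> by simp
      qed
      thus "t \<le> p \<bullet> y" by (rule key)
    qed
    have all: "r \<le> p \<bullet> y" if "(y, r) \<in> A i" for i y r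
    proof -
      define l where "l = e / (e + norm y)"
      have l0: "0 < l" using e unfolding l_def by (simp add: add_pos_nonneg)
      have l1: "l \<le> 1" using e unfolding l_def by (subst divide_le_eq_1_pos) (auto intro: add_pos_nonneg)
      have "(l *\<^sub>R y + (1-l) *\<^sub>R 0, l*r + (1-l)*0) \<in> A i"
        by (rule Aconv[OF that A00]) (use l0 l1 in auto)
      hence Al: "(l *\<^sub>R y, l * r) \<in> A i" by simp
      have "norm (l *\<^sub>R y) = e * norm y / (e + norm y)" using l0 e unfolding l_def by (simp add: abs_of_pos add_pos_nonneg)
      also have "\<dots> < e" using e by (simp add: divide_less_eq add_pos_nonneg)
      finally have "l * r \<le> p \<bullet> (l *\<^sub>R y)" by (rule small[OF Al])
      hence "l * r \<le> l * (p \<bullet> y)" by simp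
      thus ?thesis using l0 by simp
    qed
    have "Dfun (u i) g (x0 i) y \<le> ereal (p \<bullet> y)" for i y
      by (rule Dfun_le, rule all) (auto simp: A_def)
    thus ?P2 by blast
  qed
  have I1: "double_auction_eq u g x0 \<longleftrightarrow> ?P2" using P12 P21 by (rule iffI)
  have I2: "?P2 \<longleftrightarrow> (\<exists>p. g \<bullet> p = 1 \<and> (\<forall>i w. u i w \<ge> u i (x0 i) \<longrightarrow> p \<bullet> w \<ge> p \<bullet> x0 i))"
    using P23 P32 by (rule iffI)
  show ?thesis unfolding P2eq using I1 I2 by (rule conjI)
qed

end
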